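(* For every positive integer $t$ there exist constants $\alpha,\beta,\gamma>0$ such that the following holds. Let $s$ be a positive integer and $n\geq 2$ an integer, and let $G$ be a semilinear graph of complexity $t$ on $n$ vertices that contains no clique of size $s$. Then $$\chi(G)\leq \alpha s^{\beta}(\log n)^{\gamma}.$$
   Context: A function $f:\mathbb{R}^{m}\to\mathbb{R}$ is linear if $f(\mathbf{x})=b+\sum_{i=1}^m a_i\mathbf{x}(i)$ for some reals $a_1,\dots,a_m,b$. A (finite, simple) graph $G$ is semilinear of complexity $t$ if $V(G)\subset\mathbb{R}^d$ for some positive integer $d$, and there are $t$ linear functions $f_1,\dots,f_t:\mathbb{R}^d\times\mathbb{R}^d\to\mathbb{R}$ and a Boolean function $\phi:\{\mathrm{F},\mathrm{T}\}^{3t}\to\{\mathrm{F},\mathrm{T}\}$ such that for distinct $\mathbf{x},\mathbf{y}\in V(G)$, $\{\mathbf{x},\mathbf{y}\}$ is an edge iff $\phi\big(\{f_i(\mathbf{x},\mathbf{y})<0,\ f_i(\mathbf{x},\mathbf{y})\leq 0,\ f_i(\mathbf{x},\mathbf{y})=0\}_{i\in[t]}\big)=\mathrm{T}$; it is assumed that this truth value is unchanged when $\mathbf{x}$ and $\mathbf{y}$ are swapped. $\chi(G)$ is the chromatic number. *)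

theory Defs
  imports Complex_Main
begin

text \<open>Points of R^d are represented as real lists of length d.
A finite simple graph is a finite vertex set V with a symmetric irreflexive
edge relation E supported on V.\<close>

definition simple_graph :: "'a set \<Rightarrow> ('a \<Rightarrow> 'a \<Rightarrow> bool) \<Rightarrow> bool" where
  "simple_graph V E \<longleftrightarrow> finite V \<and>
     (\<forall>x y. E x y \<longrightarrow> x \<in> V \<and> y \<in> V \<and> x \<noteq> y) \<and>
     (\<forall>x y. E x y \<longrightarrow> E y x)"

definition lin_fun :: "nat \<Rightarrow> (nat \<Rightarrow> real) \<Rightarrow> (nat \<Rightarrow> real) \<Rightarrow> real \<Rightarrow> real list \<Rightarrow> real list \<Rightarrow> real" where
  "lin_fun d a c b x y = b + (\<Sum>i<d. a i * x ! i) + (\<Sum>i<d. c i * y ! i)"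

definition sign_pattern :: "nat \<Rightarrow> (nat \<Rightarrow> real list \<Rightarrow> real list \<Rightarrow> real) \<Rightarrow> real list \<Rightarrow> real list \<Rightarrow> bool list" where
  "sign_pattern t f x y = concat (map (\<lambda>i. [f i x y < 0, f i x y \<le> 0, f i x y = 0]) [0..<t])"

definition semilinear :: "nat \<Rightarrow> real list set \<Rightarrow> (real list \<Rightarrow> real list \<Rightarrow> bool) \<Rightarrow> bool" where
  "semilinear t V E \<longleftrightarrow>
    (\<exists>d::nat. d > 0 \<and> (\<forall>x\<in>V. length x = d) \<and>
      (\<exists>(a :: nat \<Rightarrow> nat \<Rightarrow> real) (c :: nat \<Rightarrow> nat \<Rightarrow> real) (b :: nat \<Rightarrow> real)
         (\<phi> :: bool list \<Rightarrow> bool).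
        (\<forall>x\<in>V. \<forall>y\<in>V. x \<noteq> y \<longrightarrow>
           (E x y \<longleftrightarrow> \<phi> (sign_pattern t (\<lambda>i. lin_fun d (a i) (c i) (b i)) x y)))))"

definition has_clique :: "'a set \<Rightarrow> ('a \<Rightarrow> 'a \<Rightarrow> bool) \<Rightarrow> nat \<Rightarrow> bool" where
  "has_clique V E s \<longleftrightarrow> (\<exists>K. K \<subseteq> V \<and> finite K \<and> card K = s \<and>
      (\<forall>x\<in>K. \<forall>y\<in>K. x \<noteq> y \<longrightarrow> E x y))"

definition chromatic_number :: "'a set \<Rightarrow> ('a \<Rightarrow> 'a \<Rightarrow> bool) \<Rightarrow> nat" where
  "chromatic_number V E = (LEAST k. \<exists>col :: 'a \<Rightarrow> nat.
      (\<forall>x\<in>V. col x < k) \<and> (\<forall>x\<in>V. \<forall>y\<in>V. E x y \<longrightarrow> col x \<noteq> col y))"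

end

theory Submission
  imports Defs
begin


definition lev :: "nat \<Rightarrow> nat \<Rightarrow> nat" where
  "lev a b = (LEAST l. a div 2^(l+1) = b div 2^(l+1))"

definition clsf :: "nat \<Rightarrow> nat \<Rightarrow> nat" where
  "clsf a b = (if a = b then 0 else 2 * lev a b + (if a < b then 1 else 2))"

definition blkf :: "nat \<Rightarrow> nat \<Rightarrow> nat" where
  "blkf a b = (if a = b then a else a div 2^(lev a b + 1))"

definition cmpn :: "'a::linorder \<Rightarrow> 'a \<Rightarrow> int" where
  "cmpn a b = (if a < b then -1 else if a = b then 0 else 1)"

definition tauf :: "nat \<Rightarrow> int" where
  "tauf c = (if c = 0 then 0 else if odd c then -1 else 1)"

definition hh :: "int \<Rightarrow> nat \<Rightarrow> nat \<Rightarrow> int" where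
  "hh tau p q = (if p < q then -1 else if q < p then 1 else tau)"

lemma lev_prop: "a div 2^(lev a b + 1) = b div 2^(lev a b + 1)"
proof -
  have "a < 2^(a+b+1)" "b < 2^(a+b+1)"
    by (metis less_exp le_add1 less_le_trans one_less_numeral_iff power_increasing_iff semiring_norm(76) add.commute trans_less_add2)+
  hence "a div 2^(a+b+1) = b div 2^(a+b+1)" by simp
  thus ?thesis unfolding lev_def by (rule LeastI)
qed

lemma lev_le: "a div 2^(l+1) = b div 2^(l+1) \<Longrightarrow> lev a b \<le> l"
  unfolding lev_def by (rule Least_le)

lemma lev_ne: assumes "a \<noteq> b" shows "a div 2^(lev a b) \<noteq> b div 2^(lev a b)"
proof (cases "lev a b")
  case 0 then show ?thesis using assms by simp
next
  case (Suc k)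
  hence "k < lev a b" by simp
  hence "\<not> (a div 2^(k+1) = b div 2^(k+1))" unfolding lev_def by (rule not_less_Least)
  then show ?thesis using Suc by simp
qed

lemma div_less_imp: "(a::nat) div m < b div m \<Longrightarrow> a < b"
  by (metis div_le_mono not_le)

lemma halves:
  fixes a b D :: nat
  assumes D: "D > 0" and e: "a div (2*D) = b div (2*D)" and ne: "a div D \<noteq> b div D"
  shows "(a < b \<longrightarrow> a div D = 2*(a div (2*D)) \<and> b div D = 2*(a div (2*D)) + 1) \<and>
         (b < a \<longrightarrow> b div D = 2*(a div (2*D)) \<and> a div D = 2*(a div (2*D)) + 1)"
proof -
  have qa: "a div (2*D) = a div D div 2" by (metis div_mult2_eq mult.commute)
  have qb: "b div (2*D) = b div D div 2" by (metis div_mult2_eq mult.commute)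
  have "a < b \<Longrightarrow> a div D \<le> b div D" by (simp add: div_le_mono)
  moreover have "b < a \<Longrightarrow> b div D \<le> a div D" by (simp add: div_le_mono)
  ultimately show ?thesis using e ne qa qb by auto
qed

lemma cls_key:
  assumes c: "clsf a1 b1 = clsf a2 b2"
  shows "cmpn a1 b2 = hh (tauf (clsf a1 b1)) (blkf a1 b1) (blkf a2 b2)"
proof (cases "a1 = b1")
  case True
  hence "a2 = b2" using c unfolding clsf_def by (auto split: if_splits)
  then show ?thesis using True unfolding cmpn_def hh_def tauf_def blkf_def clsf_def by auto
next
  case False
  hence ne2: "a2 \<noteq> b2" using c unfolding clsf_def by (auto split: if_splits)
  have L: "lev a1 b1 = lev a2 b2" and O: "(a1 < b1) = (a2 < b2)"
    using c False ne2 unfolding clsf_def by (auto split: if_splits; presburger)+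
  define l where "l = lev a1 b1"
  define D :: nat where "D = 2^l"
  have D0: "D > 0" unfolding D_def by simp
  have DD: "(2::nat)^(l+1) = 2*D" unfolding D_def by simp
  have e1: "a1 div (2*D) = b1 div (2*D)" using lev_prop[of a1 b1] DD l_def by simp
  have e2: "a2 div (2*D) = b2 div (2*D)" using lev_prop[of a2 b2] DD l_def L by simp
  have n1: "a1 div D \<noteq> b1 div D" using lev_ne[OF False] D_def l_def by simp
  have n2: "a2 div D \<noteq> b2 div D" using lev_ne[OF ne2] D_def l_def L by simp
  note h1 = halves[OF D0 e1 n1] and h2 = halves[OF D0 e2 n2]
  have bk1: "blkf a1 b1 = a1 div (2*D)" using False DD l_def unfolding blkf_def by simp
  have bk2: "blkf a2 b2 = a2 div (2*D)" using ne2 DD l_def L unfolding blkf_def by simp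
  have tau: "tauf (clsf a1 b1) = (if a1 < b1 then -1 else 1)"
    using False unfolding tauf_def clsf_def by auto
  show ?thesis
  proof (cases "a1 div (2*D) < a2 div (2*D)")
    case True
    hence "a1 < b2" using e2 div_less_imp by metis
    then show ?thesis using True bk1 bk2 unfolding cmpn_def hh_def by simp
  next
    case F1: False
    show ?thesis
    proof (cases "a2 div (2*D) < a1 div (2*D)")
      case True
      hence "b2 < a1" using e2 div_less_imp by metis
      then show ?thesis using True bk1 bk2 unfolding cmpn_def hh_def by auto
    next
      case False
      hence eq: "a1 div (2*D) = a2 div (2*D)" using F1 by simp
      show ?thesis
      proof (cases "a1 < b1")
        case True
        hence "a2 < b2" using O by simp
        hence "a1 div D < b2 div D" using h1 h2 True eq by simp
        hence "a1 < b2" by (rule div_less_imp)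
        then show ?thesis using eq bk1 bk2 tau True unfolding cmpn_def hh_def by simp
      next
        case F: False
        hence "b1 < a1" using \<open>a1 \<noteq> b1\<close> by simp
        moreover have "b2 < a2" using O F ne2 by auto
        ultimately have "b2 div D < a1 div D" using h1 h2 eq by simp
        hence "b2 < a1" by (rule div_less_imp)
        then show ?thesis using eq bk1 bk2 tau F unfolding cmpn_def hh_def by auto
      qed
    qed
  qed
qed

lemma cls_bound:
  assumes "a < 2^(L+1)" "b < 2^(L+1)"
  shows "clsf a b < 2*L + 3"
proof -
  have "a div 2^(L+1) = b div 2^(L+1)" using assms by simp
  hence "lev a b \<le> L" by (rule lev_le)
  thus ?thesis unfolding clsf_def by auto
qed

lemma hh_trans:
  assumes "hh tau p q = hh tau q r"
  shows "hh tau p r = hh tau p q"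
  using assms unfolding hh_def by (auto split: if_splits)



lemma sorted_wrt_pair:
  assumes "sorted_wrt R xs" "u \<in> set xs" "w \<in> set xs" "u \<noteq> w"
  shows "R u w \<or> R w u"
proof -
  obtain i where i: "i < length xs" "xs ! i = u" using assms(2) by (metis in_set_conv_nth)
  obtain j where j: "j < length xs" "xs ! j = w" using assms(3) by (metis in_set_conv_nth)
  have "i \<noteq> j" using i j assms(4) by auto
  then show ?thesis using assms(1) i j unfolding sorted_wrt_iff_nth_less
    by (metis linorder_neqE_nat)
qed

lemma sorted_wrt_irrefl_distinct:
  assumes "sorted_wrt R xs" "\<forall>x\<in>set xs. \<not> R x x"
  shows "distinct xs"
  using assms by (induction xs) auto

lemma mirsky:
  fixes V :: "'a set" and R :: "'a \<Rightarrow> 'a \<Rightarrow> bool"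
  assumes fin: "finite V"
    and tr: "\<And>x y z. x \<in> V \<Longrightarrow> y \<in> V \<Longrightarrow> z \<in> V \<Longrightarrow> R x y \<Longrightarrow> R y z \<Longrightarrow> R x z"
    and ch: "\<And>K. K \<subseteq> V \<Longrightarrow> (\<forall>u\<in>K. \<forall>w\<in>K. u \<noteq> w \<longrightarrow> R u w \<or> R w u) \<Longrightarrow> card K < s"
  shows "\<exists>h. (\<forall>x\<in>V. h x < s) \<and> (\<forall>x\<in>V. \<forall>y\<in>V. x \<noteq> y \<longrightarrow> R x y \<longrightarrow> h x \<noteq> h y)"
proof -
  obtain f :: "'a \<Rightarrow> nat" where bf: "bij_betw f V {0..<card V}"
    using ex_bij_betw_finite_nat[OF fin] by blast
  hence inj: "inj_on f V" by (simp add: bij_betw_def)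
  define R' where "R' x y = (R x y \<and> x \<noteq> y \<and> (R y x \<longrightarrow> f x < f y))" for x y
  have tr': "R' x z" if "x \<in> V" "y \<in> V" "z \<in> V" "R' x y" "R' y z" for x y z
  proof -
    have xz: "R x z" using tr[OF that(1-3)] that(4,5) unfolding R'_def by blast
    have "x \<noteq> z"
    proof
      assume "x = z"
      then have "R y x" "R x y" using that unfolding R'_def by auto
      then show False using that \<open>x = z\<close> unfolding R'_def by auto
    qed
    moreover have "f x < f z" if "R z x"
    proof -
      have "R y z" using \<open>R' y z\<close> unfolding R'_def by blast
      have "R x y" using \<open>R' x y\<close> unfolding R'_def by blast
      have "R y x" using tr[OF \<open>y \<in> V\<close> \<open>z \<in> V\<close> \<open>x \<in> V\<close> \<open>R y z\<close> that] .
      moreover have "R z y" using tr[OF \<open>z \<in> V\<close> \<open>x \<in> V\<close> \<open>y \<in> V\<close> that \<open>R x y\<close>] .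
      ultimately show ?thesis using \<open>R' x y\<close> \<open>R' y z\<close> unfolding R'_def by auto
    qed
    ultimately show ?thesis using xz unfolding R'_def by auto
  qed
  define S where "S x = {length xs | xs. set xs \<subseteq> V \<and> sorted_wrt R' (xs @ [x])}" for x
  define h where "h x = Max (S x)" for x
  have lenb: "length xs < s - 1 \<and> length xs + 1 < s" if "set xs \<subseteq> V" "x \<in> V" "sorted_wrt R' (xs @ [x])" for xs x
  proof -
    have "\<forall>u\<in>set (xs@[x]). \<not> R' u u" unfolding R'_def by auto
    hence d: "distinct (xs @ [x])" using sorted_wrt_irrefl_distinct that(3) by blast
    have "\<forall>u\<in>set (xs@[x]). \<forall>w\<in>set (xs@[x]). u \<noteq> w \<longrightarrow> R u w \<or> R w u"
      using sorted_wrt_pair[OF that(3)] unfolding R'_def by blast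
    moreover have "set (xs@[x]) \<subseteq> V" using that by simp
    ultimately have "card (set (xs@[x])) < s" using ch by blast
    thus ?thesis using distinct_card[OF d] by simp
  qed
  have finS: "finite (S x)" for x
  proof -
    have "S x \<subseteq> {..card V}"
    proof
      fix k assume "k \<in> S x"
      then obtain xs where xs: "k = length xs" "set xs \<subseteq> V" "sorted_wrt R' (xs @ [x])" unfolding S_def by blast
      have "\<forall>u\<in>set xs. \<not> R' u u" unfolding R'_def by auto
      have "distinct (xs @ [x])" using sorted_wrt_irrefl_distinct[OF xs(3)] unfolding R'_def by auto
      hence "distinct xs" by simp
      hence "length xs = card (set xs)" by (simp add: distinct_card)
      also have "\<dots> \<le> card V" using card_mono[OF fin xs(2)] .
      finally have "length xs \<le> card V" .
      thus "k \<in> {..card V}" using xs by simp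
    qed
    thus ?thesis using finite_subset by blast
  qed
  have inS: "0 \<in> S x" for x unfolding S_def by force
  have hbound: "h x < s" if "x \<in> V" for x
  proof -
    have "h x \<in> S x" unfolding h_def using Max_in[OF finS, of x] inS[of x] by blast
    then obtain xs where xs: "h x = length xs" "set xs \<subseteq> V" "sorted_wrt R' (xs @ [x])" unfolding S_def by blast
    thus ?thesis using lenb[OF xs(2) that xs(3)] by simp
  qed
  have hlt: "h x < h y" if "x \<in> V" "y \<in> V" "R' x y" for x y
  proof -
    have "h x \<in> S x" unfolding h_def using Max_in[OF finS, of x] inS[of x] by blast
    then obtain xs where xs: "h x = length xs" "set xs \<subseteq> V" "sorted_wrt R' (xs @ [x])" unfolding S_def by blast
    have "sorted_wrt R' ((xs @ [x]) @ [y])"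
      unfolding sorted_wrt_append[of R' "xs@[x]"]
    proof (intro conjI)
      show "sorted_wrt R' (xs @ [x])" by fact
      show "sorted_wrt R' [y]" by simp
      show "\<forall>u\<in>set (xs @ [x]). \<forall>w\<in>set [y]. R' u w"
      proof (intro ballI)
        fix u w assume u: "u \<in> set (xs @ [x])" and w: "w \<in> set [y]"
        show "R' u w"
        proof (cases "u = x")
          case True then show ?thesis using w that by simp
        next
          case False
          hence "u \<in> set xs" using u by simp
          hence "R' u x" using xs(3) unfolding sorted_wrt_append[of R' xs "[x]"] by simp
          moreover have "u \<in> V" using \<open>u \<in> set xs\<close> xs(2) by blast
          ultimately have "R' u y" using tr'[of u x y] that by blast
          then show ?thesis using w by simp
        qed
      qed
    qed
    moreover have "set (xs @ [x]) \<subseteq> V" using xs(2) that by simp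
    ultimately have "length (xs @ [x]) \<in> S y" unfolding S_def by blast
    hence "length (xs @ [x]) \<le> h y" unfolding h_def using finS by simp
    thus ?thesis using xs by simp
  qed
  show ?thesis
  proof (intro exI conjI ballI impI)
    fix x assume "x \<in> V" thus "h x < s" by (rule hbound)
  next
    fix x y assume xy: "x \<in> V" "y \<in> V" "x \<noteq> y" "R x y"
    have "f x \<noteq> f y" using inj xy by (meson inj_on_contraD)
    hence "R' x y \<or> R' y x" using xy unfolding R'_def by auto
    thus "h x \<noteq> h y" using hlt[of x y] hlt[of y x] xy by linarith
  qed
qed



definition rk :: "real set \<Rightarrow> real \<Rightarrow> nat" where
  "rk W u = card {v\<in>W. v < u}"

lemma rk_less: assumes "finite W" "u \<in> W" "w \<in> W" "u < w" shows "rk W u < rk W w"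
proof -
  have "{v\<in>W. v < u} \<subset> {v\<in>W. v < w}" using assms by auto
  thus ?thesis unfolding rk_def using assms(1) by (simp add: psubset_card_mono)
qed

lemma rk_cmp: assumes "finite W" "u \<in> W" "w \<in> W" shows "cmpn (rk W u) (rk W w) = cmpn u w"
  using rk_less[OF assms(1,2,3)] rk_less[OF assms(1,3,2)] unfolding cmpn_def
  by (cases u w rule: linorder_cases) auto

lemma rk_bound: assumes "finite W" "u \<in> W" shows "rk W u < card W"
proof -
  have "{v\<in>W. v < u} \<subset> W" using assms by auto
  thus ?thesis unfolding rk_def using assms(1) by (simp add: psubset_card_mono)
qed

definition gpat :: "int list \<Rightarrow> bool list" where
  "gpat cs = concat (map (\<lambda>c. [c = -1, c \<noteq> 1, c = 0]) cs)"

lemma gpat_len: "length (gpat cs) = 3 * length cs"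
  unfolding gpat_def by (induction cs) auto

lemma gpat_inj:
  assumes "length cs = length ds" "set cs \<subseteq> {-1,0,1}" "set ds \<subseteq> {-1,0,1}" "gpat cs = gpat ds"
  shows "cs = ds"
  using assms
proof (induction cs ds rule: list_induct2)
  case Nil then show ?case by simp
next
  case (Cons x xs y ys)
  have "[x = -1, x \<noteq> 1, x = 0] @ gpat xs = [y = -1, y \<noteq> 1, y = 0] @ gpat ys"
    using Cons.prems(3) unfolding gpat_def by simp
  hence "[x = -1, x \<noteq> 1, x = 0] = [y = -1, y \<noteq> 1, y = 0]" and g: "gpat xs = gpat ys" by auto
  hence "x = y" using Cons.prems by auto
  then show ?case using Cons g by auto
qed

lemma cmpn_range: "cmpn a b \<in> {-1,0,1}" unfolding cmpn_def by auto

lemma sp_gpat: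
  assumes "\<And>i. f i x y = Pf i - Qf i"
  shows "sign_pattern t f x y = gpat (map (\<lambda>i. cmpn (Pf i) (Qf i)) [0..<t])"
proof -
  have "\<And>i. [f i x y < 0, f i x y \<le> 0, f i x y = 0] = [cmpn (Pf i) (Qf i) = -1, cmpn (Pf i) (Qf i) \<noteq> 1, cmpn (Pf i) (Qf i) = 0]"
    using assms unfolding cmpn_def by auto
  thus ?thesis unfolding sign_pattern_def gpat_def by (simp add: comp_def)
qed



lemma core:
  fixes s n L0 :: nat and V :: "real list set" and E :: "real list \<Rightarrow> real list \<Rightarrow> bool"
  assumes sg: "simple_graph V E" and sl: "semilinear t V E" and cV: "card V = n"
    and nc: "\<not> has_clique V E s" and nL: "n \<le> 2^L0"
  shows "chromatic_number V E \<le> (2*L0+3+s) ^ (t + 2^(3*t))"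
proof -
  have fin: "finite V" using sg unfolding simple_graph_def by blast
  have Ein: "\<And>x y. E x y \<Longrightarrow> x \<in> V \<and> y \<in> V \<and> x \<noteq> y" using sg unfolding simple_graph_def by blast
  have Esym: "\<And>x y. E x y \<Longrightarrow> E y x" using sg unfolding simple_graph_def by blast
  obtain d a c b \<phi> where iff: "\<And>x y. x\<in>V \<Longrightarrow> y\<in>V \<Longrightarrow> x \<noteq> y \<Longrightarrow>
       (E x y \<longleftrightarrow> \<phi> (sign_pattern t (\<lambda>i. lin_fun d (a i) (c i) (b i)) x y))"
    using sl unfolding semilinear_def by blast
  define P where "P i v = b i + (\<Sum>j<d. a i j * v ! j)" for i v
  define Q where "Q i v = - (\<Sum>j<d. c i j * v ! j)" for i v
  have lf: "lin_fun d (a i) (c i) (b i) x y = P i x - Q i y" for i x y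
    unfolding lin_fun_def P_def Q_def by simp
  define CM where "CM x y = map (\<lambda>i. cmpn (P i x) (Q i y)) [0..<t]" for x y
  have spg: "sign_pattern t (\<lambda>i. lin_fun d (a i) (c i) (b i)) x y = gpat (CM x y)" for x y
    unfolding CM_def by (rule sp_gpat) (simp add: lf)
  have Eg: "E x y \<longleftrightarrow> \<phi> (gpat (CM x y))" if "x\<in>V" "y\<in>V" "x \<noteq> y" for x y
    using iff[OF that] spg by simp
  define W where "W i = P i ` V \<union> Q i ` V" for i
  have finW: "finite (W i)" for i unfolding W_def using fin by simp
  have cardW: "card (W i) \<le> 2 * n" for i
  proof -
    have "card (W i) \<le> card (P i ` V) + card (Q i ` V)" unfolding W_def by (rule card_Un_le)
    also have "\<dots> \<le> n + n" using card_image_le[OF fin] cV by (metis add_mono)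
    finally show ?thesis by simp
  qed
  define ra where "ra i v = rk (W i) (P i v)" for i v
  define rb where "rb i v = rk (W i) (Q i v)" for i v
  define cl where "cl i v = clsf (ra i v) (rb i v)" for i v
  define bl where "bl i v = blkf (ra i v) (rb i v)" for i v
  define CV where "CV v = map (\<lambda>i. cl i v) [0..<t]" for v
  have key: "cmpn (P i x) (Q i y) = hh (tauf (cl i x)) (bl i x) (bl i y)"
    if "x \<in> V" "y \<in> V" "cl i x = cl i y" for i x y
  proof -
    have "cmpn (P i x) (Q i y) = cmpn (ra i x) (rb i y)"
      unfolding ra_def rb_def using rk_cmp[OF finW, of "P i x" i "Q i y"] that W_def by auto
    also have "\<dots> = hh (tauf (cl i x)) (bl i x) (bl i y)"
      unfolding cl_def bl_def by (rule cls_key) (use that in \<open>simp add: cl_def\<close>)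
    finally show ?thesis .
  qed
  have clb: "cl i v < 2*L0+3" if "v \<in> V" for i v
  proof -
    have "ra i v < 2^(L0+1)" "rb i v < 2^(L0+1)"
      using rk_bound[OF finW, of "P i v" i] rk_bound[OF finW, of "Q i v" i] cardW[of i] nL that
      unfolding ra_def rb_def W_def by auto
    thus ?thesis unfolding cl_def by (rule cls_bound)
  qed
  have CMr: "set (CM x y) \<subseteq> {-1,0,1}" for x y unfolding CM_def using cmpn_range by auto
  define R where "R \<pi> x y = (CV x = CV y \<and> gpat (CM x y) = \<pi> \<and> \<phi> \<pi>)" for \<pi> x y
  have Rtr: "R \<pi> x z" if "x \<in> V" "y \<in> V" "z \<in> V" "R \<pi> x y" "R \<pi> y z" for \<pi> x y z
  proof -
    have cxy: "CV x = CV y" "CV y = CV z" using that unfolding R_def by auto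
    have ge: "gpat (CM x y) = gpat (CM y z)" using that unfolding R_def by auto
    have "length (CM x y) = length (CM y z)" by (simp add: CM_def)
    from gpat_inj[OF this CMr CMr ge] have cm: "CM x y = CM y z" .
    have "CM x z = CM x y" unfolding CM_def
    proof (rule map_cong[OF refl])
      fix i assume "i \<in> set [0..<t]"
      hence it: "i < t" by simp
      have nCV: "CV v ! i = cl i v" for v using it unfolding CV_def by simp
      have nCM: "CM u v ! i = cmpn (P i u) (Q i v)" for u v using it unfolding CM_def by simp
      have c1: "cl i x = cl i y" "cl i y = cl i z" using cxy nCV by metis+
      have "cmpn (P i x) (Q i y) = cmpn (P i y) (Q i z)"
        using cm nCM by metis
      hence "hh (tauf (cl i x)) (bl i x) (bl i y) = hh (tauf (cl i x)) (bl i y) (bl i z)"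
        using key[of x y i] key[of y z i] c1 that by simp
      hence "hh (tauf (cl i x)) (bl i x) (bl i z) = hh (tauf (cl i x)) (bl i x) (bl i y)"
        by (rule hh_trans)
      thus "cmpn (P i x) (Q i z) = cmpn (P i x) (Q i y)"
        using key[of x z i] key[of x y i] c1 that by simp
    qed
    thus ?thesis using that cxy unfolding R_def by simp
  qed
  have Rch: "card K < s" if K: "K \<subseteq> V" "\<forall>u\<in>K. \<forall>w\<in>K. u \<noteq> w \<longrightarrow> R \<pi> u w \<or> R \<pi> w u" for K \<pi>
  proof (rule ccontr)
    assume "\<not> card K < s"
    hence "s \<le> card K" by simp
    then obtain T where T: "T \<subseteq> K" "card T = s" "finite T" by (rule obtain_subset_with_card_n)
    have "\<forall>x\<in>T. \<forall>y\<in>T. x \<noteq> y \<longrightarrow> E x y"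
    proof (intro ballI impI)
      fix x y assume xy: "x \<in> T" "y \<in> T" "x \<noteq> y"
      have V: "x \<in> V" "y \<in> V" using T(1) K(1) xy by blast+
      have "x \<in> K" "y \<in> K" using T(1) xy by blast+
      hence "R \<pi> x y \<or> R \<pi> y x" using K(2) xy(3) by blast
      thus "E x y"
      proof
        assume "R \<pi> x y" thus "E x y" using Eg[OF V xy(3)] unfolding R_def by simp
      next
        assume "R \<pi> y x" hence "E y x" using Eg[OF V(2) V(1)] xy(3) unfolding R_def by simp
        thus "E x y" by (rule Esym)
      qed
    qed
    moreover have "T \<subseteq> V" using T(1) K(1) by blast
    ultimately have "has_clique V E s" unfolding has_clique_def using T(2,3) by blast
    thus False using nc by simp
  qed
  have "\<forall>\<pi>. \<exists>h. (\<forall>x\<in>V. h x < s) \<and> (\<forall>x\<in>V. \<forall>y\<in>V. x \<noteq> y \<longrightarrow> R \<pi> x y \<longrightarrow> h x \<noteq> h y)"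
  proof
    fix \<pi>
    show "\<exists>h. (\<forall>x\<in>V. h x < s) \<and> (\<forall>x\<in>V. \<forall>y\<in>V. x \<noteq> y \<longrightarrow> R \<pi> x y \<longrightarrow> h x \<noteq> h y)"
    proof (rule mirsky[OF fin, of "R \<pi>" s])
      show "R \<pi> x z" if "x \<in> V" "y \<in> V" "z \<in> V" "R \<pi> x y" "R \<pi> y z" for x y z
        using Rtr[OF that] .
      show "card K < s" if "K \<subseteq> V" "\<forall>u\<in>K. \<forall>w\<in>K. u \<noteq> w \<longrightarrow> R \<pi> u w \<or> R \<pi> w u" for K
        using Rch[OF that] .
    qed
  qed
  hence "\<exists>H. \<forall>\<pi>. (\<forall>x\<in>V. H \<pi> x < s) \<and> (\<forall>x\<in>V. \<forall>y\<in>V. x \<noteq> y \<longrightarrow> R \<pi> x y \<longrightarrow> H \<pi> x \<noteq> H \<pi> y)"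
    by (rule choice)
  then obtain H where H0: "\<forall>\<pi>. (\<forall>x\<in>V. H \<pi> x < s) \<and> (\<forall>x\<in>V. \<forall>y\<in>V. x \<noteq> y \<longrightarrow> R \<pi> x y \<longrightarrow> H \<pi> x \<noteq> H \<pi> y)"
    by blast
  have Hb: "H \<pi> x < s" if "x \<in> V" for \<pi> x using H0 that by blast
  have Hp: "H \<pi> x \<noteq> H \<pi> y" if "x \<in> V" "y \<in> V" "x \<noteq> y" "R \<pi> x y" for \<pi> x y using H0 that by blast
  define pats where "pats = List.n_lists (3*t) [True, False]"
  define Bn where "Bn = 2*L0+3+s"
  define m where "m = t + 2^(3*t)"
  define Lc where "Lc v = CV v @ map (\<lambda>\<pi>. H \<pi> v) pats" for v
  define SS where "SS = {xs. set xs \<subseteq> {0..<Bn} \<and> length xs = m}"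
  have finSS: "finite SS" unfolding SS_def by (rule finite_lists_length_eq) simp
  have cardSS: "card SS = Bn ^ m" unfolding SS_def using card_lists_length_eq[of "{0..<Bn}" m] by simp
  have lenCV: "length (CV v) = t" for v unfolding CV_def by simp
  have lenp: "length pats = 2^(3*t)" unfolding pats_def by (simp add: length_n_lists numeral_2_eq_2)
  have LcS: "Lc v \<in> SS" if "v \<in> V" for v
  proof -
    have c1: "cl i v < Bn" for i using clb[OF that, of i] unfolding Bn_def by simp
    have c2: "H \<pi> v < Bn" for \<pi> using Hb[OF that, of \<pi>] unfolding Bn_def by simp
    have "set (CV v) \<subseteq> {0..<Bn}" unfolding CV_def using c1 by auto
    moreover have "set (map (\<lambda>\<pi>. H \<pi> v) pats) \<subseteq> {0..<Bn}" using c2 by auto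
    ultimately show ?thesis unfolding SS_def Lc_def m_def using lenCV lenp by simp
  qed
  obtain g where g: "bij_betw g SS {0..<card SS}" using ex_bij_betw_finite_nat[OF finSS] by blast
  define col where "col v = g (Lc v)" for v
  have colb: "col v < Bn ^ m" if "v \<in> V" for v
    using bij_betwE[OF g] LcS[OF that] cardSS unfolding col_def by auto
  have colp: "col x \<noteq> col y" if "x \<in> V" "y \<in> V" "E x y" for x y
  proof
    assume eq: "col x = col y"
    have xy: "x \<noteq> y" using Ein that(3) by blast
    have "Lc x = Lc y" using eq bij_betw_imp_inj_on[OF g] LcS that unfolding col_def inj_on_def by blast
    hence cv: "CV x = CV y" and mp: "map (\<lambda>\<pi>. H \<pi> x) pats = map (\<lambda>\<pi>. H \<pi> y) pats"
      unfolding Lc_def using lenCV by auto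
    define \<pi> where "\<pi> = gpat (CM x y)"
    have ph: "\<phi> \<pi>" using Eg[OF that(1,2) xy] that(3) \<pi>_def by simp
    have "\<pi> \<in> set pats" unfolding pats_def set_n_lists \<pi>_def using gpat_len[of "CM x y"]
      by (auto simp add: CM_def)
    hence "H \<pi> x = H \<pi> y" using mp by (simp add: map_eq_conv)
    moreover have "R \<pi> x y" unfolding R_def using cv ph \<pi>_def by simp
    ultimately show False using Hp[OF that(1,2) xy] by blast
  qed
  have "chromatic_number V E \<le> Bn ^ m"
    unfolding chromatic_number_def
    by (rule Least_le) (use colb colp in blast)
  thus ?thesis unfolding Bn_def m_def .
qed



lemma ln2_half: "1/2 \<le> ln (2::real)"
  using ln_diff_le[of 1 2] by simp

lemma arith_part:
  fixes n s :: nat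
  assumes n2: "n \<ge> 2" and s1: "s > 0"
  defines "L0 \<equiv> nat \<lceil>log 2 (real n)\<rceil>"
  shows "n \<le> 2^L0" and "real (2*L0+3+s) \<le> 16 * real s * ln (real n)"
proof -
  have npos: "real n > 0" using n2 by simp
  have lnn: "ln (real n) \<ge> ln 2" using n2 by simp
  hence lnh: "ln (real n) \<ge> 1/2" using ln2_half by linarith
  have lg0: "log 2 (real n) \<ge> 0" using n2 by simp
  have L0eq: "real L0 = real_of_int \<lceil>log 2 (real n)\<rceil>" unfolding L0_def using lg0 by simp
  have "real n = 2 powr log 2 (real n)" using npos by simp
  also have "\<dots> \<le> 2 powr real L0" using L0eq by (simp add: le_ceiling_iff)
  also have "\<dots> = 2 ^ L0" by (simp add: powr_realpow)
  finally have "real n \<le> 2 ^ L0" .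
  thus "n \<le> 2^L0" by (metis of_nat_le_iff of_nat_numeral of_nat_power)
  have "real L0 \<le> log 2 (real n) + 1" using L0eq by linarith
  moreover have "log 2 (real n) \<le> 2 * ln (real n)"
  proof -
    have "log 2 (real n) = ln (real n) / ln 2" by (simp add: log_def)
    also have "\<dots> \<le> ln (real n) / (1/2)"
      using ln2_half lnh by (intro divide_left_mono) auto
    finally show ?thesis by simp
  qed
  ultimately have "real (2*L0+3) \<le> 14 * ln (real n)" using lnh by simp
  moreover have "real s \<le> 2 * real s * ln (real n)"
  proof -
    have "real s * 1 \<le> real s * (2 * ln (real n))" by (rule mult_left_mono) (use lnh in auto)
    thus ?thesis by simp
  qed
  moreover have "14 * ln (real n) \<le> 14 * real s * ln (real n)"
  proof -
    have "1 * (14 * ln (real n)) \<le> real s * (14 * ln (real n))" by (rule mult_right_mono) (use lnh s1 in auto)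
    thus ?thesis by simp
  qed
  ultimately show "real (2*L0+3+s) \<le> 16 * real s * ln (real n)"
    unfolding of_nat_add[of "2*L0+3" s] by linarith
qed



theorem theorem1p4:
  fixes t :: nat
  assumes "t > 0"
  shows "\<exists>\<alpha> \<beta> \<gamma> :: real. \<alpha> > 0 \<and> \<beta> > 0 \<and> \<gamma> > 0 \<and>
    (\<forall>(s::nat) (n::nat) (V :: real list set) (E :: real list \<Rightarrow> real list \<Rightarrow> bool).
       s > 0 \<longrightarrow> n \<ge> 2 \<longrightarrow> simple_graph V E \<longrightarrow> semilinear t V E \<longrightarrow>
       card V = n \<longrightarrow> \<not> has_clique V E s \<longrightarrow>
       real (chromatic_number V E) \<le> \<alpha> * real s powr \<beta> * ln (real n) powr \<gamma>)"
proof -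
  define m where "m = t + 2^(3*t)"
  have m0: "m > 0" unfolding m_def by simp
  have main: "\<forall>(s::nat) (n::nat) (V :: real list set) (E :: real list \<Rightarrow> real list \<Rightarrow> bool).
       s > 0 \<longrightarrow> n \<ge> 2 \<longrightarrow> simple_graph V E \<longrightarrow> semilinear t V E \<longrightarrow>
       card V = n \<longrightarrow> \<not> has_clique V E s \<longrightarrow>
       real (chromatic_number V E) \<le> 16 ^ m * real s powr real m * ln (real n) powr real m"
  proof (intro allI impI)
    fix s n :: nat and V :: "real list set" and E :: "real list \<Rightarrow> real list \<Rightarrow> bool"
    assume s0: "0 < s" and n2: "2 \<le> n" and sg: "simple_graph V E" and sl: "semilinear t V E"
      and cV: "card V = n" and nc: "\<not> has_clique V E s"
    define L0 where "L0 = nat \<lceil>log 2 (real n)\<rceil>"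
    have nL: "n \<le> 2^L0" and Bb: "real (2*L0+3+s) \<le> 16 * real s * ln (real n)"
      using arith_part[OF n2 s0] unfolding L0_def by auto
    have "chromatic_number V E \<le> (2*L0+3+s) ^ m"
      using core[OF sg sl cV nc nL] unfolding m_def .
    hence "real (chromatic_number V E) \<le> real (2*L0+3+s) ^ m"
      by (metis of_nat_le_iff of_nat_power)
    also have "\<dots> \<le> (16 * real s * ln (real n)) ^ m"
      by (rule power_mono[OF Bb]) simp
    also have "\<dots> = 16 ^ m * real s ^ m * ln (real n) ^ m"
      by (simp add: power_mult_distrib)
    also have "\<dots> = 16 ^ m * real s powr real m * ln (real n) powr real m"
    proof -
      have "ln (real n) > 0" using n2 by simp
      thus ?thesis using s0 by (simp add: powr_realpow)
    qed
    finally show "real (chromatic_number V E) \<le> 16 ^ m * real s powr real m * ln (real n) powr real m" .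
  qed
  show ?thesis
    by (rule exI[of _ "16 ^ m"], rule exI[of _ "real m"], rule exI[of _ "real m"]) (use m0 main in simp)
qed


end
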